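(* Let $M>0$, $0<a<M$, $\mu>0$, $m\in\mathbb{Z}\setminus\{0\}$, $n\in\{0,1,2,\dots\}$, $l\in\{|m|,|m|+1,\dots\}$, and define $$\alpha_1=\frac{ma}{\mu M^2},\quad \alpha_2=\frac{2n+1}{\mu M}\sqrt{1-\frac{a^2}{M^2}},\quad \alpha=\alpha_1-i\alpha_2,\quad \epsilon=2\sqrt{1-\frac{a^2}{M^2}},\quad \beta=6-\frac{l(l+1)}{\mu^2M^2}.$$ Assume $\beta\geq 0$ and define $$q(z)=z^4+\frac{4z}{\beta+\epsilon}\left[(2+\epsilon)(z^2+1)+\alpha(z^2-1)\right]+2\,\frac{16-\beta+3\epsilon}{\beta+\epsilon}\,z^2+1,\quad z\in\mathbb{C}.$$ Then $q$ has no real roots. In addition, if $\alpha_1\geq 0$ and $0\leq\beta\leq 16+3\epsilon$, then $$\lim_{x\to\infty,\ x\in\mathbb{R}}\arctan\left(\frac{\mathrm{Im}(q(x))}{\mathrm{Re}(q(x))}\right)=0.$$ *)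

theory Defs
  imports "HOL-Analysis.Analysis"
begin

definition alpha1 :: "real \<Rightarrow> real \<Rightarrow> real \<Rightarrow> int \<Rightarrow> real" where
  "alpha1 M a \<mu> m = real_of_int m * a / (\<mu> * M^2)"

definition alpha2 :: "real \<Rightarrow> real \<Rightarrow> real \<Rightarrow> nat \<Rightarrow> real" where
  "alpha2 M a \<mu> n = (2 * real n + 1) / (\<mu> * M) * sqrt (1 - a^2 / M^2)"

definition alpha :: "real \<Rightarrow> real \<Rightarrow> real \<Rightarrow> int \<Rightarrow> nat \<Rightarrow> complex" where
  "alpha M a \<mu> m n = complex_of_real (alpha1 M a \<mu> m) - \<i> * complex_of_real (alpha2 M a \<mu> n)"

definition eps :: "real \<Rightarrow> real \<Rightarrow> real" where
  "eps M a = 2 * sqrt (1 - a^2 / M^2)"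

definition beta :: "real \<Rightarrow> real \<Rightarrow> nat \<Rightarrow> real" where
  "beta M \<mu> l = 6 - real l * (real l + 1) / (\<mu>^2 * M^2)"

definition qfun :: "real \<Rightarrow> real \<Rightarrow> real \<Rightarrow> int \<Rightarrow> nat \<Rightarrow> nat \<Rightarrow> complex \<Rightarrow> complex" where
  "qfun M a \<mu> m n l z =
     (let \<beta> = complex_of_real (beta M \<mu> l); \<epsilon> = complex_of_real (eps M a);
          \<alpha> = alpha M a \<mu> m n
      in z^4 + 4 * z / (\<beta> + \<epsilon>) * ((2 + \<epsilon>) * (z^2 + 1) + \<alpha> * (z^2 - 1))
         + 2 * ((16 - \<beta> + 3 * \<epsilon>) / (\<beta> + \<epsilon>)) * z^2 + 1)"

end

theory Submission
  imports Defs "HOL-Real_Asymp.Real_Asymp"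
begin

lemma inv0: "((\<lambda>x::real. c / x^k) \<longlongrightarrow> 0) at_top" if "k > 0"
proof -
  have "((\<lambda>x::real. 1 / x^k) \<longlongrightarrow> 0) at_top" using that by real_asymp
  from tendsto_mult_right_zero[OF this, of c] show ?thesis by simp
qed
lemma gen: "((\<lambda>x::real. (c3*x^3 + c1*x)/(x^4 + d3*x^3 + d2*x^2 + d1*x + 1)) \<longlongrightarrow> 0) at_top"
proof -
  have h: "((\<lambda>x. (c3/x^1 + c1/x^3)/(1 + d3/x^1 + d2/x^2 + d1/x^3 + 1/x^4)) \<longlongrightarrow> (0+0)/(1+0+0+0+0)) at_top"
    by (intro tendsto_intros inv0) auto
  have e: "\<forall>\<^sub>F x in at_top. (c3/x^1 + c1/x^3)/(1 + d3/x^1 + d2/x^2 + d1/x^3 + 1/x^4) = (c3*x^3 + c1*x)/(x^4 + d3*x^3 + d2*x^2 + d1*x + 1)"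
      using eventually_gt_at_top[of 0]
    proof eventually_elim
      case (elim x)
      have 1: "c3/x^1 + c1/x^3 = (c3*x^3 + c1*x)/x^4" using elim by (simp add: field_simps power_def)
      have 2: "1 + d3/x^1 + d2/x^2 + d1/x^3 + 1/x^4 = (x^4 + d3*x^3 + d2*x^2 + d1*x + 1)/x^4"
        using elim by (simp add: field_simps power_def)
      show ?case unfolding 1 2 using elim by simp
    qed
  from h tendsto_cong[OF e] show ?thesis by simp
qed
lemma gen_id:
  fixes B E A1 A2 X :: complex
  assumes "B + E \<noteq> 0"
  shows "X^4 + 4 * X / (B + E) * ((2 + E) * (X^2 + 1) + (A1 - \<i> * A2) * (X^2 - 1))
         + 2 * ((16 - B + 3 * E) / (B + E)) * X^2 + 1 =
    (X^4 + (4*(2+E+A1)/(B+E))*X^3 + (2*(16-B+3*E)/(B+E))*X^2 + (4*(2+E-A1)/(B+E))*X + 1)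
    + \<i> * ((-4*A2/(B+E))*X^3 + (4*A2/(B+E))*X)"
  unfolding divide_inverse by algebra

lemma qform:
  fixes x M a \<mu> :: real and m :: int and n l :: nat
  assumes s: "beta M \<mu> l + eps M a > 0"
  defines "b \<equiv> beta M \<mu> l" and "e \<equiv> eps M a" and "a1 \<equiv> alpha1 M a \<mu> m" and "a2 \<equiv> alpha2 M a \<mu> n"
  shows "qfun M a \<mu> m n l (complex_of_real x) =
    complex_of_real (x^4 + (4*(2+e+a1)/(b+e))*x^3 + (2*(16-b+3*e)/(b+e))*x^2 + (4*(2+e-a1)/(b+e))*x + 1)
    + \<i> * complex_of_real ((-4*a2/(b+e))*x^3 + (4*a2/(b+e))*x)"
proof -
  have nz: "complex_of_real b + complex_of_real e \<noteq> 0"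
    using s unfolding b_def e_def by (metis of_real_add of_real_eq_0_iff less_irrefl)
  show ?thesis
    unfolding qfun_def Let_def alpha_def b_def[symmetric] e_def[symmetric] a1_def[symmetric] a2_def[symmetric]
    using gen_id[OF nz, of x a1 a2] by simp
qed

theorem mainTheorem8:
  fixes M a \<mu> :: real and m :: int and n l :: nat
  assumes "M > 0" and "0 < a" and "a < M" and "\<mu> > 0" and "m \<noteq> 0"
    and "int l \<ge> \<bar>m\<bar>"
    and "beta M \<mu> l \<ge> 0"
  shows "(\<forall>x::real. qfun M a \<mu> m n l (complex_of_real x) \<noteq> 0)
    \<and> (alpha1 M a \<mu> m \<ge> 0 \<and> beta M \<mu> l \<le> 16 + 3 * eps M a \<longrightarrow>
        ((\<lambda>x::real. arctan (Im (qfun M a \<mu> m n l (complex_of_real x))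
                          / Re (qfun M a \<mu> m n l (complex_of_real x)))) \<longlongrightarrow> 0) at_top)"
proof -
  define b where "b = beta M \<mu> l"
  define e where "e = eps M a"
  define a1 where "a1 = alpha1 M a \<mu> m"
  define a2 where "a2 = alpha2 M a \<mu> n"
  have "a^2 < M^2" using assms by (simp add: power_strict_mono)
  hence "a^2 / M^2 < 1" using assms by simp
  hence sq: "sqrt (1 - a^2/M^2) > 0" by simp
  have e0: "e > 0" unfolding e_def eps_def using sq by simp
  have a20: "a2 > 0" unfolding a2_def alpha2_def using sq assms by simp
  have b0: "b \<ge> 0" using assms b_def by simp
  have s0: "b + e > 0" using e0 b0 by simp
  define R where "R x = x^4 + (4*(2+e+a1)/(b+e))*x^3 + (2*(16-b+3*e)/(b+e))*x^2 + (4*(2+e-a1)/(b+e))*x + 1" for x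
  define I where "I x = (-4*a2/(b+e))*x^3 + (4*a2/(b+e))*x" for x
  have q: "qfun M a \<mu> m n l (complex_of_real x) = complex_of_real (R x) + \<i> * complex_of_real (I x)" for x
    unfolding R_def I_def b_def e_def a1_def a2_def using qform s0 b_def e_def by blast
  have Re: "Re (qfun M a \<mu> m n l (complex_of_real x)) = R x" for x unfolding q by simp
  have Im: "Im (qfun M a \<mu> m n l (complex_of_real x)) = I x" for x unfolding q by simp
  have part1: "qfun M a \<mu> m n l (complex_of_real x) \<noteq> 0" for x
  proof
    assume h: "qfun M a \<mu> m n l (complex_of_real x) = 0"
    hence r: "R x = 0" and i: "I x = 0" using Re[of x] Im[of x] by auto
    have "I x = (4*a2/(b+e)) * (x * (1 - x^2))" unfolding I_def divide_inverse by algebra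
    with i a20 s0 have "x * (1 - x^2) = 0" by simp
    hence "x = 0 \<or> x = 1 \<or> x = -1"
      by (auto simp: power2_eq_1_iff)
    moreover have "R 0 \<noteq> 0" unfolding R_def by simp
    moreover
    have inv: "(b+e) * inverse (b+e) = 1" using s0 by simp
    have "R 1 * (b+e) = 48 + 16*e" unfolding R_def divide_inverse using inv by simp algebra
    hence "R 1 \<noteq> 0" using e0 by auto
    moreover have "R (-1) \<noteq> 0"
    proof -
      have "R (-1) * (b+e) = 16" unfolding R_def divide_inverse using inv by simp algebra
      thus ?thesis by auto
    qed
    ultimately show False using r by auto
  qed
  have lim: "((\<lambda>x. I x / R x) \<longlongrightarrow> 0) at_top"
    unfolding I_def R_def by (rule gen)
  have "((\<lambda>x. arctan (I x / R x)) \<longlongrightarrow> arctan 0) at_top"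
    by (intro tendsto_arctan lim)
  hence "((\<lambda>x. arctan (I x / R x)) \<longlongrightarrow> 0) at_top" by simp
  with part1 show ?thesis unfolding Re Im by blast
qed

end
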